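(* Let $(\mathcal{O},g,f)$ be an oriented matroid program with $\mathcal{O}$ of rank $r\ge 3$, and let $(C,X,Y)$ be a modular triple of cocircuits such that $z(C\circ X\circ Y)$ is a flat of rank $r-3$ of $\mathcal{M}(\mathcal{O})$, with $X_g=Y_g=+$ and $C_g=C_f=0$. Let $X^1,Y^1$ be distinct cocircuits with $X^1_g=Y^1_g=+$ such that $z(X^1)\supseteq z(X\circ C)$, $z(Y^1)\supseteq z(Y\circ C)$, $X\neq X^1\neq C$, $Y\neq Y^1\neq C$, and $X^1\circ Y^1$ is an edge. Then $X^1\leftrightarrow_{g,f}X$ and $Y^1\leftrightarrow_{g,f}Y$, and moreover $X^1\to_{g,f}Y^1$ if and only if $X\to_{g,f}Y$.
   Context: Oriented matroid $\mathcal{O}$ of rank $r$ on finite $E$, given by its cocircuits (sign vectors in $\{+,-,0\}^E$), underlying matroid $\mathcal{M}(\mathcal{O})$. Notation: $z(X)$ zero set, $\operatorname{sep}(X,Y)=\{e:X_e=-Y_e\ne0\}$, $(X\circ Y)_e=X_e$ if $X_e\ne0$, else $Y_e$. An edge is a covector whose zero set is a flat of rank $r-2$; cocircuits $X\ne\pm Y$ are comodular if $X\circ Y$ is an edge. A modular triple of cocircuits $(C,X,Y)$ is one in which each of the three pairs is comodular. For comodular $X,Y$ and $e\in\operatorname{sep}(X,Y)$, cocircuit elimination of $e$ between $X$ and $Y$ yields the unique cocircuit $Z$ with $Z_e=0$ and $Z_h=(X\circ Y)_h$ for $h\notin\operatorname{sep}(X,Y)$. An oriented matroid program $(\mathcal{O},g,f)$: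 $g\neq f\in E$, $g$ not a loop, $f$ not a coloop. For comodular $X,Y$ with $X_g=Y_g\ne0$, let $Z$ be obtained by eliminating $g$ between $-X$ and $Y$; $X\to_{g,f}Y$ if $Z_f=+$, $X\leftarrow_{g,f}Y$ if $Z_f=-$, $X\leftrightarrow_{g,f}Y$ if $Z_f=0$. *)

theory Defs
  imports Main
begin

datatype sign = Neg | Zer | Pos

fun sneg :: "sign \<Rightarrow> sign" where
  "sneg Neg = Pos" | "sneg Zer = Zer" | "sneg Pos = Neg"

type_synonym 'e signvec = "'e \<Rightarrow> sign"

definition zerovec :: "'e signvec" where "zerovec = (\<lambda>_. Zer)"

definition vneg :: "'e signvec \<Rightarrow> 'e signvec" where
  "vneg X = (\<lambda>e. sneg (X e))"

definition supp :: "'e signvec \<Rightarrow> 'e set" where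
  "supp X = {e. X e \<noteq> Zer}"

definition zset :: "'e set \<Rightarrow> 'e signvec \<Rightarrow> 'e set" where
  "zset E X = {e \<in> E. X e = Zer}"

definition sep :: "'e signvec \<Rightarrow> 'e signvec \<Rightarrow> 'e set" where
  "sep X Y = {e. X e \<noteq> Zer \<and> X e = sneg (Y e)}"

definition comp :: "'e signvec \<Rightarrow> 'e signvec \<Rightarrow> 'e signvec" (infixr "\<circ>\<^sub>s" 70) where
  "comp X Y = (\<lambda>e. if X e \<noteq> Zer then X e else Y e)"

definition oriented_matroid :: "'e set \<Rightarrow> 'e signvec set \<Rightarrow> bool" where
  "oriented_matroid E \<C> \<longleftrightarrow>
     finite E \<and>
     (\<forall>X\<in>\<C>. supp X \<subseteq> E) \<and>
     zerovec \<notin> \<C> \<and>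
     (\<forall>X\<in>\<C>. vneg X \<in> \<C>) \<and>
     (\<forall>X\<in>\<C>. \<forall>Y\<in>\<C>. supp X \<subseteq> supp Y \<longrightarrow> X = Y \<or> X = vneg Y) \<and>
     (\<forall>X\<in>\<C>. \<forall>Y\<in>\<C>. \<forall>e. X \<noteq> vneg Y \<and> e \<in> sep X Y \<longrightarrow>
        (\<exists>Z\<in>\<C>. Z e = Zer \<and> {h. Z h = Pos} \<subseteq> {h. X h = Pos} \<union> {h. Y h = Pos}
                        \<and> {h. Z h = Neg} \<subseteq> {h. X h = Neg} \<union> {h. Y h = Neg}))"

inductive_set covectors :: "'e signvec set \<Rightarrow> 'e signvec set" for \<C> where
  zero: "zerovec \<in> covectors \<C>"
| comp: "X \<in> \<C> \<Longrightarrow> V \<in> covectors \<C> \<Longrightarrow> X \<circ>\<^sub>s V \<in> covectors \<C>"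

definition flats :: "'e set \<Rightarrow> 'e signvec set \<Rightarrow> 'e set set" where
  "flats E \<C> = {zset E V | V. V \<in> covectors \<C>}"

text \<open>Rank of a flat of the underlying matroid: length of a longest strict chain of flats
  ending in it (geometric lattice of flats).\<close>
definition flat_rank :: "'e set \<Rightarrow> 'e signvec set \<Rightarrow> 'e set \<Rightarrow> nat" where
  "flat_rank E \<C> F = Max {length L - 1 | L. L \<noteq> [] \<and> set L \<subseteq> flats E \<C>
                              \<and> sorted_wrt (\<subset>) L \<and> last L = F}"

definition om_rank :: "'e set \<Rightarrow> 'e signvec set \<Rightarrow> nat" where
  "om_rank E \<C> = flat_rank E \<C> E"

definition is_flat_of_rank :: "'e set \<Rightarrow> 'e signvec set \<Rightarrow> 'e set \<Rightarrow> nat \<Rightarrow> bool" where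
  "is_flat_of_rank E \<C> F k \<longleftrightarrow> F \<in> flats E \<C> \<and> flat_rank E \<C> F = k"

definition is_edge :: "'e set \<Rightarrow> 'e signvec set \<Rightarrow> 'e signvec \<Rightarrow> bool" where
  "is_edge E \<C> V \<longleftrightarrow> V \<in> covectors \<C> \<and> is_flat_of_rank E \<C> (zset E V) (om_rank E \<C> - 2)"

definition comodular :: "'e set \<Rightarrow> 'e signvec set \<Rightarrow> 'e signvec \<Rightarrow> 'e signvec \<Rightarrow> bool" where
  "comodular E \<C> X Y \<longleftrightarrow> X \<in> \<C> \<and> Y \<in> \<C> \<and> X \<noteq> Y \<and> X \<noteq> vneg Y \<and> is_edge E \<C> (X \<circ>\<^sub>s Y)"

definition modular_triple :: "'e set \<Rightarrow> 'e signvec set \<Rightarrow> 'e signvec \<Rightarrow> 'e signvec \<Rightarrow> 'e signvec \<Rightarrow> bool" where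
  "modular_triple E \<C> C X Y \<longleftrightarrow> comodular E \<C> C X \<and> comodular E \<C> C Y \<and> comodular E \<C> X Y"

text \<open>Cocircuit elimination of e between comodular X, Y: the unique cocircuit Z with
  Z_e = 0 and Z_h = (X o Y)_h for h not in sep(X,Y).\<close>
definition elim :: "'e signvec set \<Rightarrow> 'e signvec \<Rightarrow> 'e signvec \<Rightarrow> 'e \<Rightarrow> 'e signvec" where
  "elim \<C> X Y e = (THE Z. Z \<in> \<C> \<and> Z e = Zer \<and> (\<forall>h. h \<notin> sep X Y \<longrightarrow> Z h = (X \<circ>\<^sub>s Y) h))"

definition is_loop :: "'e signvec set \<Rightarrow> 'e \<Rightarrow> bool" where
  "is_loop \<C> e \<longleftrightarrow> (\<forall>X\<in>\<C>. X e = Zer)"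

definition is_coloop :: "'e signvec set \<Rightarrow> 'e \<Rightarrow> bool" where
  "is_coloop \<C> e \<longleftrightarrow> (\<exists>X\<in>\<C>. supp X = {e})"

definition om_program :: "'e set \<Rightarrow> 'e signvec set \<Rightarrow> 'e \<Rightarrow> 'e \<Rightarrow> bool" where
  "om_program E \<C> g f \<longleftrightarrow> oriented_matroid E \<C> \<and> g \<in> E \<and> f \<in> E \<and> g \<noteq> f
      \<and> \<not> is_loop \<C> g \<and> \<not> is_coloop \<C> f"

definition prog_pair :: "'e set \<Rightarrow> 'e signvec set \<Rightarrow> 'e \<Rightarrow> 'e signvec \<Rightarrow> 'e signvec \<Rightarrow> bool" where
  "prog_pair E \<C> g X Y \<longleftrightarrow> comodular E \<C> X Y \<and> X g = Y g \<and> X g \<noteq> Zer"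

definition arrow_to :: "'e set \<Rightarrow> 'e signvec set \<Rightarrow> 'e \<Rightarrow> 'e \<Rightarrow> 'e signvec \<Rightarrow> 'e signvec \<Rightarrow> bool" where
  "arrow_to E \<C> g f X Y \<longleftrightarrow> prog_pair E \<C> g X Y \<and> elim \<C> (vneg X) Y g f = Pos"

definition arrow_from :: "'e set \<Rightarrow> 'e signvec set \<Rightarrow> 'e \<Rightarrow> 'e \<Rightarrow> 'e signvec \<Rightarrow> 'e signvec \<Rightarrow> bool" where
  "arrow_from E \<C> g f X Y \<longleftrightarrow> prog_pair E \<C> g X Y \<and> elim \<C> (vneg X) Y g f = Neg"

definition arrow_both :: "'e set \<Rightarrow> 'e signvec set \<Rightarrow> 'e \<Rightarrow> 'e \<Rightarrow> 'e signvec \<Rightarrow> 'e signvec \<Rightarrow> bool" where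
  "arrow_both E \<C> g f X Y \<longleftrightarrow> prog_pair E \<C> g X Y \<and> elim \<C> (vneg X) Y g f = Zer"

end

theory Submission
  imports Defs
begin

lemma sorted_sub_distinct: "sorted_wrt (\<subset>) (L::'a set list) \<Longrightarrow> distinct L"
  by (induction L) auto

lemma sorted_sub_last: "sorted_wrt (\<subset>) (L::'a set list) \<Longrightarrow> L \<noteq> [] \<Longrightarrow> x \<in> set L \<Longrightarrow> x \<subseteq> last L"
proof (induction L)
  case Nil then show ?case by simp
next
  case (Cons a L)
  then show ?case by (cases L) auto
qed

lemma flats_sub: "flats E \<C> \<subseteq> Pow E"
  by (auto simp: flats_def zset_def)

lemma RM:
  assumes om: "oriented_matroid E \<C>" and A: "A \<in> flats E \<C>" and B: "B \<in> flats E \<C>" and AB: "A \<subset> B"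
  shows "flat_rank E \<C> A < flat_rank E \<C> B"
proof -
  have finE: "finite E" using om by (simp add: oriented_matroid_def)
  define S where "S F = {L. L \<noteq> [] \<and> set L \<subseteq> flats E \<C> \<and> sorted_wrt (\<subset>) L \<and> last L = F}" for F
  have fin: "finite (S F)" for F
  proof -
    have "S F \<subseteq> {L. set L \<subseteq> Pow E \<and> length L \<le> card (Pow E)}"
    proof
      fix L assume "L \<in> S F"
      then have d: "distinct L" and s: "set L \<subseteq> Pow E"
        using sorted_sub_distinct flats_sub unfolding S_def by blast+
      have "length L = card (set L)" using d by (simp add: distinct_card)
      also have "\<dots> \<le> card (Pow E)" using s finE by (intro card_mono) auto
      finally show "L \<in> {L. set L \<subseteq> Pow E \<and> length L \<le> card (Pow E)}" using s by simp
    qed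
    moreover have "finite {L. set L \<subseteq> Pow E \<and> length L \<le> card (Pow E)}"
      using finE by (intro finite_lists_length_le) simp
    ultimately show ?thesis by (rule finite_subset)
  qed
  have fr: "flat_rank E \<C> F = Max ((\<lambda>L. length L - 1) ` S F)" for F
    unfolding flat_rank_def S_def by (intro arg_cong[where f=Max]) blast
  have "[A] \<in> S A" using A by (simp add: S_def)
  then have "flat_rank E \<C> A \<in> (\<lambda>L. length L - 1) ` S A"
    unfolding fr using fin by (intro Max_in) auto
  then obtain L where L: "L \<in> S A" and rA: "flat_rank E \<C> A = length L - 1" by auto
  have "L @ [B] \<in> S B"
    using L B AB sorted_sub_last[of L] unfolding S_def by (auto simp: sorted_wrt_append)
  then have "length (L @ [B]) - 1 \<in> (\<lambda>L. length L - 1) ` S B" by (rule imageI)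
  then have "length (L @ [B]) - 1 \<le> flat_rank E \<C> B"
    unfolding fr using fin by (intro Max_ge) auto
  moreover have "L \<noteq> []" using L by (simp add: S_def)
  ultimately show ?thesis using rA by (cases L) auto
qed

lemma sneg_sneg[simp]: "sneg (sneg s) = s" by (cases s) auto
lemma vneg_vneg[simp]: "vneg (vneg X) = X" by (simp add: vneg_def)
lemma vneg_inj[simp]: "(vneg A = vneg B) = (A = B)" by (metis vneg_vneg)
lemma sneg_fix[simp]: "(sneg s = s) = (s = Zer)" by (cases s) auto
lemma sneg_fix2[simp]: "(s = sneg s) = (s = Zer)" by (cases s) auto
lemma vneg_app[simp]: "vneg X e = sneg (X e)" by (simp add: vneg_def)
lemma sneg_Zer_iff[simp]: "(sneg s = Zer) = (s = Zer)" by (cases s) auto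
lemma zset_comp[simp]: "zset E (A \<circ>\<^sub>s B) = zset E A \<inter> zset E B"
  by (auto simp: zset_def comp_def)
lemma zset_vneg[simp]: "zset E (vneg A) = zset E A"
  by (auto simp: zset_def)
lemma zset_zero[simp]: "zset E zerovec = E"
  by (auto simp: zset_def zerovec_def)

lemma om_neg: "oriented_matroid E \<C> \<Longrightarrow> A \<in> \<C> \<Longrightarrow> vneg A \<in> \<C>"
  by (simp add: oriented_matroid_def)

lemma om_inE: "oriented_matroid E \<C> \<Longrightarrow> A \<in> \<C> \<Longrightarrow> A e \<noteq> Zer \<Longrightarrow> e \<in> E"
  unfolding oriented_matroid_def supp_def by blast

lemma om_incomp: "oriented_matroid E \<C> \<Longrightarrow> A \<in> \<C> \<Longrightarrow> B \<in> \<C> \<Longrightarrow> supp A \<subseteq> supp B \<Longrightarrow> A = B \<or> A = vneg B"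
  unfolding oriented_matroid_def by blast

lemma om_incomp_z: assumes "oriented_matroid E \<C>" "A \<in> \<C>" "B \<in> \<C>" "zset E B \<subseteq> zset E A"
  shows "A = B \<or> A = vneg B"
proof -
  have "supp A \<subseteq> supp B"
    using assms om_inE[OF assms(1) assms(2)] unfolding supp_def zset_def by blast
  then show ?thesis using om_incomp assms by blast
qed

lemma om_nonzero: assumes "oriented_matroid E \<C>" "A \<in> \<C>" shows "\<exists>e\<in>E. A e \<noteq> Zer"
proof (rule ccontr)
  assume "\<not> ?thesis"
  then have "A = zerovec" using om_inE[OF assms] by (auto simp: zerovec_def)
  then show False using assms by (simp add: oriented_matroid_def)
qed

lemma welim: assumes "oriented_matroid E \<C>" "A \<in> \<C>" "B \<in> \<C>" "A \<noteq> vneg B" "e \<in> sep A B"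
  shows "\<exists>Z\<in>\<C>. Z e = Zer \<and> (\<forall>h. Z h = Pos \<longrightarrow> A h = Pos \<or> B h = Pos)
                   \<and> (\<forall>h. Z h = Neg \<longrightarrow> A h = Neg \<or> B h = Neg)"
proof -
  from assms obtain Z where "Z \<in> \<C>" "Z e = Zer" "{h. Z h = Pos} \<subseteq> {h. A h = Pos} \<union> {h. B h = Pos}"
     "{h. Z h = Neg} \<subseteq> {h. A h = Neg} \<union> {h. B h = Neg}"
    unfolding oriented_matroid_def by blast
  then show ?thesis by blast
qed

lemma comp_zero[simp]: "A \<circ>\<^sub>s zerovec = A" by (rule ext) (simp add: comp_def zerovec_def)

lemma cov_of: "A \<in> \<C> \<Longrightarrow> A \<in> covectors \<C>"
  using covectors.comp[OF _ covectors.zero, of A \<C>] by simp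

lemma flat1: "A \<in> \<C> \<Longrightarrow> zset E A \<in> flats E \<C>"
  unfolding flats_def using cov_of[of A \<C>] by blast
lemma flat2: "A \<in> \<C> \<Longrightarrow> B \<in> \<C> \<Longrightarrow> zset E A \<inter> zset E B \<in> flats E \<C>"
  unfolding flats_def using covectors.comp[OF _ cov_of[of B \<C>], of A]
  by (auto intro!: exI[of _ "A \<circ>\<^sub>s B"])
lemma flat3I: "A \<in> \<C> \<Longrightarrow> B \<in> \<C> \<Longrightarrow> C \<in> \<C> \<Longrightarrow> zset E A \<inter> zset E B \<inter> zset E C \<in> flats E \<C>"
  unfolding flats_def using covectors.comp[OF _ covectors.comp[OF _ cov_of[of C \<C>]], of A B]
  by (auto intro!: exI[of _ "A \<circ>\<^sub>s B \<circ>\<^sub>s C"] simp: Int_assoc)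
lemma flatE: "E \<in> flats E \<C>"
  unfolding flats_def by (auto intro!: exI[of _ zerovec] covectors.zero)

lemma U:
  assumes om: "oriented_matroid E \<C>" and N: "N \<in> flats E \<C>" "flat_rank E \<C> N = om_rank E \<C> - 2"
    and P: "P \<in> \<C>" and Q: "Q \<in> \<C>" and sub: "N \<subseteq> zset E P \<inter> zset E Q" and ne: "N \<noteq> zset E P \<inter> zset E Q"
  shows "P = Q \<or> P = vneg Q"
proof (rule ccontr)
  assume c: "\<not> ?thesis"
  then have "\<not> zset E Q \<subseteq> zset E P" using om_incomp_z[OF om P Q] by blast
  then have 1: "zset E P \<inter> zset E Q \<subset> zset E Q" by blast
  obtain e where "e \<in> E" "Q e \<noteq> Zer" using om_nonzero[OF om Q] by blast
  then have 2: "zset E Q \<subset> E" by (auto simp: zset_def)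
  have "flat_rank E \<C> N < flat_rank E \<C> (zset E P \<inter> zset E Q)"
    using RM[OF om N(1) flat2[OF P Q]] sub ne by blast
  moreover have "flat_rank E \<C> (zset E P \<inter> zset E Q) < flat_rank E \<C> (zset E Q)"
    using RM[OF om flat2[OF P Q] flat1[OF Q] 1] .
  moreover have "flat_rank E \<C> (zset E Q) < flat_rank E \<C> E"
    using RM[OF om flat1[OF Q] flatE 2] .
  ultimately show False using N(2) unfolding om_rank_def by linarith
qed


lemma zcon: assumes "\<forall>h. Z h = Pos \<longrightarrow> A h = Pos \<or> B h = Pos" "\<forall>h. Z h = Neg \<longrightarrow> A h = Neg \<or> B h = Neg"
  "N \<subseteq> zset E A" "N \<subseteq> zset E B" shows "N \<subseteq> zset E Z"
proof
  fix x assume x: "x \<in> N"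
  then have "x \<in> E" "A x = Zer" "B x = Zer" using assms by (auto simp: zset_def)
  then show "x \<in> zset E Z" using assms(1,2) by (cases "Z x") (auto simp: zset_def)
qed

lemma s1: "c \<noteq> Zer \<Longrightarrow> (c = Pos \<longrightarrow> a = Pos \<or> b = Pos) \<Longrightarrow> (c = Neg \<longrightarrow> a = Neg \<or> b = Neg)
  \<Longrightarrow> (c = Pos \<longrightarrow> a = Pos \<or> sneg b = Pos) \<Longrightarrow> (c = Neg \<longrightarrow> a = Neg \<or> sneg b = Neg) \<Longrightarrow> a \<noteq> Zer"
  by (cases c; cases b) auto
lemma s2: "c \<noteq> Zer \<Longrightarrow> (c = Pos \<longrightarrow> a = Pos \<or> b = Pos) \<Longrightarrow> (c = Neg \<longrightarrow> a = Neg \<or> b = Neg)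
  \<Longrightarrow> (sneg c = Pos \<longrightarrow> a = Pos \<or> sneg b = Pos) \<Longrightarrow> (sneg c = Neg \<longrightarrow> a = Neg \<or> sneg b = Neg) \<Longrightarrow> b \<noteq> Zer"
  by (cases c; cases b; cases a) auto

lemma PL:
  assumes om: "oriented_matroid E \<C>" and N: "N \<in> flats E \<C>" "flat_rank E \<C> N = om_rank E \<C> - 2"
   and A: "A \<in> \<C>" and B: "B \<in> \<C>" and C: "C \<in> \<C>"
   and NA: "N \<subseteq> zset E A" "N \<subseteq> zset E B" "N \<subseteq> zset E C"
   and AB: "A \<noteq> B" "A \<noteq> vneg B"
   and Cgh: "C g = Zer" "C h = Zer"
   and g: "A g = B g" "A g \<noteq> Zer"
   and h: "A h = sneg (B h)" "A h \<noteq> Zer"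
  shows False
proof -
  have hs: "h \<in> sep A B" using h by (simp add: sep_def)
  obtain Z where Z: "Z \<in> \<C>" "Z h = Zer" and Zp: "\<forall>x. Z x = Pos \<longrightarrow> A x = Pos \<or> B x = Pos"
     and Zn: "\<forall>x. Z x = Neg \<longrightarrow> A x = Neg \<or> B x = Neg"
    using welim[OF om A B AB(2) hs] by blast
  have NZ: "N \<subseteq> zset E Z" using zcon[OF Zp Zn NA(1,2)] .
  have hE: "h \<in> E" using om_inE[OF om A h(2)] .
  have hN: "h \<notin> N" using NA(1) h(2) by (auto simp: zset_def)
  have "h \<in> zset E Z \<inter> zset E C" using hE Z(2) Cgh(2) by (simp add: zset_def)
  then have ZC: "Z = C \<or> Z = vneg C" using U[OF om N Z(1) C] NZ NA(3) hN by blast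
  have gs: "g \<in> sep A (vneg B)" using g by (simp add: sep_def)
  have AB': "A \<noteq> vneg (vneg B)" using AB by simp
  obtain Z' where Z': "Z' \<in> \<C>" "Z' g = Zer" and Zp': "\<forall>x. Z' x = Pos \<longrightarrow> A x = Pos \<or> vneg B x = Pos"
     and Zn': "\<forall>x. Z' x = Neg \<longrightarrow> A x = Neg \<or> vneg B x = Neg"
    using welim[OF om A om_neg[OF om B] AB' gs] by blast
  have NZ': "N \<subseteq> zset E Z'" using zcon[of Z' A "vneg B" N E] Zp' Zn' NA(1) NA(2) by simp
  have gE: "g \<in> E" using om_inE[OF om A g(2)] .
  have gN: "g \<notin> N" using NA(1) g(2) by (auto simp: zset_def)
  have "g \<in> zset E Z' \<inter> zset E C" using gE Z'(2) Cgh(1) by (simp add: zset_def)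
  then have ZC': "Z' = C \<or> Z' = vneg C" using U[OF om N Z'(1) C] NZ' NA(3) gN by blast
  have "supp C \<subseteq> supp A \<or> supp C \<subseteq> supp B"
  proof -
    { assume a: "Z = C" "Z' = C"
      have "supp C \<subseteq> supp A" unfolding supp_def
      proof safe
        fix x assume "C x \<noteq> Zer" "A x = Zer"
        then show False using s1[of "C x" "A x" "B x"] a spec[OF Zp, of x] spec[OF Zn, of x] spec[OF Zp', of x] spec[OF Zn', of x] by (simp; metis sign.exhaust)
      qed }
    moreover
    { assume a: "Z = vneg C" "Z' = vneg C"
      have "supp C \<subseteq> supp A" unfolding supp_def
      proof safe
        fix x assume "C x \<noteq> Zer" "A x = Zer"
        then show False using s1[of "sneg (C x)" "A x" "B x"] a spec[OF Zp, of x] spec[OF Zn, of x] spec[OF Zp', of x] spec[OF Zn', of x] by (simp; metis sign.exhaust)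
      qed }
    moreover
    { assume a: "Z = C" "Z' = vneg C"
      have "supp C \<subseteq> supp B" unfolding supp_def
      proof safe
        fix x assume "C x \<noteq> Zer" "B x = Zer"
        then show False using s2[of "C x" "A x" "B x"] a spec[OF Zp, of x] spec[OF Zn, of x] spec[OF Zp', of x] spec[OF Zn', of x] by (simp; metis sign.exhaust)
      qed }
    moreover
    { assume a: "Z = vneg C" "Z' = C"
      have "supp C \<subseteq> supp B" unfolding supp_def
      proof safe
        fix x assume "C x \<noteq> Zer" "B x = Zer"
        then show False using s2[of "sneg (C x)" "A x" "B x"] a spec[OF Zp, of x] spec[OF Zn, of x] spec[OF Zp', of x] spec[OF Zn', of x] by (simp; metis sign.exhaust)
      qed }
    ultimately show ?thesis using ZC ZC' by blast
  qed
  then have "C = A \<or> C = vneg A \<or> C = B \<or> C = vneg B"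
    using om_incomp[OF om C A] om_incomp[OF om C B] by blast
  then show False using Cgh(1) g by auto
qed


lemma sign_eq: "a \<noteq> Zer \<Longrightarrow> b \<noteq> Zer \<Longrightarrow> a \<noteq> sneg b \<Longrightarrow> a = b"
  by (cases a; cases b) auto
lemma sign_self: "s = sneg s \<Longrightarrow> s = Zer"
  by (cases s) auto
lemma sign_conf: "z \<noteq> Zer \<Longrightarrow> (z = Pos \<longrightarrow> a = Pos \<or> b = Pos) \<Longrightarrow> (z = Neg \<longrightarrow> a = Neg \<or> b = Neg)
   \<Longrightarrow> a = Zer \<or> b = Zer \<or> a = b \<Longrightarrow> z = (if a \<noteq> Zer then a else b)"
  by (cases z; cases a; cases b) auto

lemma ME:
  assumes om: "oriented_matroid E \<C>" and A: "A \<in> \<C>" and B: "B \<in> \<C>"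
    and AB: "A \<noteq> B" "A \<noteq> vneg B"
    and N: "flat_rank E \<C> (zset E A \<inter> zset E B) = om_rank E \<C> - 2"
    and e: "e \<in> sep A B"
  shows "elim \<C> A B e \<in> \<C> \<and> elim \<C> A B e e = Zer \<and> (\<forall>h. h \<notin> sep A B \<longrightarrow> elim \<C> A B e h = (A \<circ>\<^sub>s B) h)"
proof -
  define N where "N = zset E A \<inter> zset E B"
  have Nf: "N \<in> flats E \<C>" "flat_rank E \<C> N = om_rank E \<C> - 2" using flat2[OF A B] N by (auto simp: N_def)
  define Pr where "Pr Z \<longleftrightarrow> Z \<in> \<C> \<and> Z e = Zer \<and> (\<forall>h. h \<notin> sep A B \<longrightarrow> Z h = (A \<circ>\<^sub>s B) h)" for Z
  obtain Z0 where Z0: "Z0 \<in> \<C>" "Z0 e = Zer" and Zp: "\<forall>x. Z0 x = Pos \<longrightarrow> A x = Pos \<or> B x = Pos"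
     and Zn: "\<forall>x. Z0 x = Neg \<longrightarrow> A x = Neg \<or> B x = Neg"
    using welim[OF om A B AB(2) e] by blast
  have NZ: "N \<subseteq> zset E Z0" using zcon[OF Zp Zn, of N E] by (auto simp: N_def)
  have Ae: "A e \<noteq> Zer" "A e = sneg (B e)" using e by (auto simp: sep_def)
  have Be: "B e \<noteq> Zer" using Ae by auto
  have eE: "e \<in> E" using om_inE[OF om A Ae(1)] .
  have eN: "e \<notin> N" using Ae by (auto simp: N_def zset_def)
  have ZB: "zset E Z0 \<inter> zset E B = N"
  proof (rule ccontr)
    assume "zset E Z0 \<inter> zset E B \<noteq> N"
    then have "Z0 = B \<or> Z0 = vneg B" using U[OF om Nf Z0(1) B] NZ by (auto simp: N_def)
    then show False using Z0(2) Be by auto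
  qed
  have ZA: "zset E Z0 \<inter> zset E A = N"
  proof (rule ccontr)
    assume "zset E Z0 \<inter> zset E A \<noteq> N"
    then have "Z0 = A \<or> Z0 = vneg A" using U[OF om Nf Z0(1) A] NZ by (auto simp: N_def)
    then show False using Z0(2) Ae by auto
  qed
  have P0: "Pr Z0"
    unfolding Pr_def
  proof (intro conjI allI impI Z0)
    fix h assume hs: "h \<notin> sep A B"
    show "Z0 h = (A \<circ>\<^sub>s B) h"
    proof (cases "A h = Zer \<and> B h = Zer")
      case True
      have "Z0 h = Zer"
      proof (cases "h \<in> E")
        case True
        then show ?thesis using \<open>A h = Zer \<and> B h = Zer\<close> NZ by (auto simp: N_def zset_def)
      next
        case False
        then show ?thesis using om_inE[OF om Z0(1), of h] by blast
      qed
      then show ?thesis using True by (simp add: comp_def)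
    next
      case False
      have nz: "Z0 h \<noteq> Zer"
      proof
        assume z: "Z0 h = Zer"
        show False
        proof (cases "A h = Zer")
          case True
          then have "B h \<noteq> Zer" using False by blast
          moreover have "h \<in> E" using om_inE[OF om B calculation] .
          ultimately show False using ZA z True by (auto simp: N_def zset_def)
        next
          case Ah: False
          show False
          proof (cases "B h = Zer")
            case True
            moreover have "h \<in> E" using om_inE[OF om A Ah] .
            ultimately show False using ZB z Ah by (auto simp: N_def zset_def)
          next
            case Bh: False
            have "A h = B h" using Ah Bh hs by (cases "A h"; cases "B h") (auto simp: sep_def)
            show False
            proof (rule PL[OF om Nf A om_neg[OF om B] Z0(1), of e h])
              show "N \<subseteq> zset E A" "N \<subseteq> zset E (vneg B)" "N \<subseteq> zset E Z0"
                using NZ by (auto simp: N_def)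
              show "A \<noteq> vneg B" "A \<noteq> vneg (vneg B)" using AB by auto
              show "Z0 e = Zer" "Z0 h = Zer" by fact+
              show "A e = vneg B e" "A e \<noteq> Zer" using Ae by auto
              show "A h = sneg (vneg B h)" "A h \<noteq> Zer" using \<open>A h = B h\<close> Ah by auto
            qed
          qed
        qed
      qed
      have "A h = Zer \<or> B h = Zer \<or> A h = B h"
        using hs by (cases "A h"; cases "B h") (auto simp: sep_def)
      then show ?thesis using sign_conf[OF nz spec[OF Zp, of h] spec[OF Zn, of h]]
        by (simp add: comp_def)
    qed
  qed
  have uniq: "W = Z0" if PW: "Pr W" for W
  proof -
    have W: "W \<in> \<C>" "W e = Zer" "\<forall>h. h \<notin> sep A B \<longrightarrow> W h = (A \<circ>\<^sub>s B) h" using PW by (auto simp: Pr_def)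
    have NW: "N \<subseteq> zset E W"
    proof
      fix x assume x: "x \<in> N"
      then have "x \<notin> sep A B" "x \<in> E" "A x = Zer" "B x = Zer" by (auto simp: N_def zset_def sep_def)
      then show "x \<in> zset E W" using W(3) by (auto simp: zset_def comp_def)
    qed
    have "e \<in> zset E W \<inter> zset E Z0" using eE W(2) Z0(2) by (simp add: zset_def)
    then have "W = Z0 \<or> W = vneg Z0" using U[OF om Nf W(1) Z0(1)] NW NZ eN by blast
    moreover have "W \<noteq> vneg Z0"
    proof
      assume WZ: "W = vneg Z0"
      have "supp Z0 \<subseteq> supp A"
      proof
        fix x assume x: "x \<in> supp Z0"
        show "x \<in> supp A"
        proof (cases "x \<in> sep A B")
          case True then show ?thesis unfolding sep_def supp_def by blast
        next
          case False
          then have "Z0 x = (A \<circ>\<^sub>s B) x" "sneg (Z0 x) = (A \<circ>\<^sub>s B) x"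
            using P0 W(3) WZ by (auto simp: Pr_def)
          then have "Z0 x = Zer" using sign_self by metis
          then show ?thesis using x by (simp add: supp_def)
        qed
      qed
      then have "Z0 = A \<or> Z0 = vneg A" using om_incomp[OF om Z0(1) A] by blast
      then show False using Z0(2) Ae by auto
    qed
    ultimately show ?thesis by blast
  qed
  have "elim \<C> A B e = Z0"
    unfolding elim_def using P0 uniq unfolding Pr_def by (rule the_equality)
  then show ?thesis using P0 by (simp add: Pr_def)
qed


lemma sign_neq: "a \<noteq> Zer \<Longrightarrow> b \<noteq> Zer \<Longrightarrow> a \<noteq> b \<Longrightarrow> a = sneg b"
  by (cases a; cases b) auto

lemma part1:
  assumes om: "oriented_matroid E \<C>" and X: "X \<in> \<C>" and C: "C \<in> \<C>" and X1: "X1 \<in> \<C>"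
    and cm: "comodular E \<C> C X" and Xg: "X g = Pos" "X1 g = Pos" and Cgf: "C g = Zer" "C f = Zer"
    and zX1: "zset E (X \<circ>\<^sub>s C) \<subseteq> zset E X1" and ne: "X \<noteq> X1" "X1 \<noteq> C"
  shows "arrow_both E \<C> g f X1 X"
proof -
  define L where "L = zset E X \<inter> zset E C"
  have Lf: "L \<in> flats E \<C>" "flat_rank E \<C> L = om_rank E \<C> - 2"
    using cm flat2[OF X C] unfolding comodular_def is_edge_def is_flat_of_rank_def L_def
    by (auto simp: Int_commute)
  have LX1: "L \<subseteq> zset E X1" using zX1 by (simp add: L_def)
  have eqL: "zset E X1 \<inter> zset E X = L"
  proof (rule ccontr)
    assume "zset E X1 \<inter> zset E X \<noteq> L"
    then have "X1 = X \<or> X1 = vneg X" using U[OF om Lf X1 X] LX1 by (auto simp: L_def)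
    then show False using ne Xg by auto
  qed
  have cmX: "comodular E \<C> X1 X"
    unfolding comodular_def is_edge_def is_flat_of_rank_def
    using X X1 ne Xg Lf eqL covectors.comp[OF X1 cov_of[OF X]] by auto
  have gE: "g \<in> E" using om_inE[OF om X] Xg by auto
  have g: "g \<in> sep (vneg X1) X" using Xg by (simp add: sep_def)
  have ME': "elim \<C> (vneg X1) X g \<in> \<C> \<and> elim \<C> (vneg X1) X g g = Zer \<and>
     (\<forall>h. h \<notin> sep (vneg X1) X \<longrightarrow> elim \<C> (vneg X1) X g h = (vneg X1 \<circ>\<^sub>s X) h)"
    by (rule ME[OF om om_neg[OF om X1] X _ _ _ g]) (use Xg ne eqL Lf in \<open>auto simp: Int_commute\<close>)
  define W where "W = elim \<C> (vneg X1) X g"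
  have W: "W \<in> \<C>" "W g = Zer" "\<forall>h. h \<notin> sep (vneg X1) X \<longrightarrow> W h = (vneg X1 \<circ>\<^sub>s X) h"
    using ME' by (auto simp: W_def)
  have LW: "L \<subseteq> zset E W"
  proof
    fix x assume x: "x \<in> L"
    then have "x \<in> E" "X x = Zer" "X1 x = Zer" using LX1 by (auto simp: L_def zset_def)
    then show "x \<in> zset E W" using W(3) by (auto simp: zset_def sep_def comp_def)
  qed
  have "g \<in> zset E W \<inter> zset E C" "g \<notin> L" using gE W(2) Cgf Xg by (auto simp: zset_def L_def)
  then have "W = C \<or> W = vneg C" using U[OF om Lf W(1) C] LW by (auto simp: L_def)
  then have "W f = Zer" using Cgf by auto
  then show ?thesis using cmX Xg unfolding arrow_both_def prog_pair_def W_def by auto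
qed


theorem lemma4p4:
  fixes E :: "'e set" and \<C> :: "'e signvec set" and g f :: 'e
    and C X Y X1 Y1 :: "'e signvec"
  assumes prog: "om_program E \<C> g f"
    and rank: "om_rank E \<C> \<ge> 3"
    and triple: "modular_triple E \<C> C X Y"
    and flat3: "is_flat_of_rank E \<C> (zset E (C \<circ>\<^sub>s X \<circ>\<^sub>s Y)) (om_rank E \<C> - 3)"
    and XgYg: "X g = Pos" "Y g = Pos"
    and Cgf: "C g = Zer" "C f = Zer"
    and X1Y1: "X1 \<in> \<C>" "Y1 \<in> \<C>" "X1 \<noteq> Y1" "X1 g = Pos" "Y1 g = Pos"
    and zX1: "zset E (X \<circ>\<^sub>s C) \<subseteq> zset E X1"
    and zY1: "zset E (Y \<circ>\<^sub>s C) \<subseteq> zset E Y1"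
    and neqX: "X \<noteq> X1" "X1 \<noteq> C"
    and neqY: "Y \<noteq> Y1" "Y1 \<noteq> C"
    and edge: "is_edge E \<C> (X1 \<circ>\<^sub>s Y1)"
  shows "arrow_both E \<C> g f X1 X \<and> arrow_both E \<C> g f Y1 Y
         \<and> (arrow_to E \<C> g f X1 Y1 \<longleftrightarrow> arrow_to E \<C> g f X Y)"
proof -
  define r where "r = om_rank E \<C>"
  have om: "oriented_matroid E \<C>" and gE: "g \<in> E" and fE: "f \<in> E"
    using prog by (auto simp: om_program_def)
  have cCX: "comodular E \<C> C X" and cCY: "comodular E \<C> C Y" and cXY: "comodular E \<C> X Y"
    using triple by (auto simp: modular_triple_def)
  have C: "C \<in> \<C>" and X: "X \<in> \<C>" and Y: "Y \<in> \<C>" and XY: "X \<noteq> Y"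
    using cCX cXY by (auto simp: comodular_def)
  have p1: "arrow_both E \<C> g f X1 X"
    by (rule part1[OF om X C X1Y1(1) cCX XgYg(1) X1Y1(4) Cgf zX1 neqX])
  have p2: "arrow_both E \<C> g f Y1 Y"
    by (rule part1[OF om Y C X1Y1(2) cCY XgYg(2) X1Y1(5) Cgf zY1 neqY])
  define L where "L = zset E X \<inter> zset E C"
  define K where "K = zset E Y \<inter> zset E C"
  define F where "F = zset E C \<inter> zset E X \<inter> zset E Y"
  have Lf: "L \<in> flats E \<C>" "flat_rank E \<C> L = r - 2"
    using cCX flat2[OF X C] unfolding comodular_def is_edge_def is_flat_of_rank_def L_def r_def
    by (auto simp: Int_commute)
  have Kf: "K \<in> flats E \<C>" "flat_rank E \<C> K = r - 2"
    using cCY flat2[OF Y C] unfolding comodular_def is_edge_def is_flat_of_rank_def K_def r_def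
    by (auto simp: Int_commute)
  have Mf: "flat_rank E \<C> (zset E X \<inter> zset E Y) = r - 2"
    using cXY unfolding comodular_def is_edge_def is_flat_of_rank_def r_def by auto
  have M1f: "flat_rank E \<C> (zset E X1 \<inter> zset E Y1) = r - 2"
    using edge unfolding is_edge_def is_flat_of_rank_def r_def by auto
  have Ff: "F \<in> flats E \<C>" "flat_rank E \<C> F = r - 3"
    using flat3 unfolding is_flat_of_rank_def r_def F_def by (auto simp: Int_assoc)
  have r3: "r \<ge> 3" using rank by (simp add: r_def)
  have rE: "flat_rank E \<C> E = r" by (simp add: r_def om_rank_def)
  have XgN: "X1 \<noteq> vneg Y1" "vneg X \<noteq> Y" "vneg X1 \<noteq> Y1" "Y \<noteq> vneg Y1" "Y1 \<noteq> vneg C"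
    using XgYg X1Y1 Cgf by (auto dest!: fun_cong[of _ _ g])
  have gs: "g \<in> sep (vneg X) Y" "g \<in> sep (vneg X1) Y1" using XgYg X1Y1 by (auto simp: sep_def)
  define Z where "Z = elim \<C> (vneg X) Y g"
  define Z1 where "Z1 = elim \<C> (vneg X1) Y1 g"
  have Z: "Z \<in> \<C>" "Z g = Zer" "\<forall>h. h \<notin> sep (vneg X) Y \<longrightarrow> Z h = (vneg X \<circ>\<^sub>s Y) h"
    unfolding Z_def by (rule ME[OF om om_neg[OF om X] Y _ _ _ gs(1), THEN conjunct1],
        (use XgN XY Mf r_def in auto)[3])
     (rule ME[OF om om_neg[OF om X] Y _ _ _ gs(1), THEN conjunct2, THEN conjunct1],
        (use XgN XY Mf r_def in auto)[3],
      rule ME[OF om om_neg[OF om X] Y _ _ _ gs(1), THEN conjunct2, THEN conjunct2],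
        (use XgN XY Mf r_def in auto)[3])
  have Z1: "Z1 \<in> \<C>" "Z1 g = Zer" "\<forall>h. h \<notin> sep (vneg X1) Y1 \<longrightarrow> Z1 h = (vneg X1 \<circ>\<^sub>s Y1) h"
    unfolding Z1_def by (rule ME[OF om om_neg[OF om X1Y1(1)] X1Y1(2) _ _ _ gs(2), THEN conjunct1],
        (use XgN X1Y1 M1f r_def in auto)[3])
     (rule ME[OF om om_neg[OF om X1Y1(1)] X1Y1(2) _ _ _ gs(2), THEN conjunct2, THEN conjunct1],
        (use XgN X1Y1 M1f r_def in auto)[3],
      rule ME[OF om om_neg[OF om X1Y1(1)] X1Y1(2) _ _ _ gs(2), THEN conjunct2, THEN conjunct2],
        (use XgN X1Y1 M1f r_def in auto)[3])
  have FL: "F \<subseteq> L" by (auto simp: F_def L_def)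
  have "L \<noteq> F" using Lf Ff r3 by auto
  then obtain h where hL: "h \<in> L" and hF: "h \<notin> F" using FL by blast
  have hE: "h \<in> E" and Xh: "X h = Zer" and Ch: "C h = Zer" and Yh: "Y h \<noteq> Zer"
    using hL hF by (auto simp: L_def F_def zset_def)
  have LX1: "L \<subseteq> zset E X1" using zX1 by (simp add: L_def)
  have KY1: "K \<subseteq> zset E Y1" using zY1 by (simp add: K_def)
  have X1h: "X1 h = Zer" using LX1 hL by (auto simp: zset_def)
  have Zh: "Z h = Y h" using Z(3) Xh by (auto simp: sep_def comp_def)
  have Z1h: "Z1 h = Y1 h" using Z1(3) X1h by (auto simp: sep_def comp_def)
  have KY1C: "zset E Y1 \<inter> zset E C = K"
  proof (rule ccontr)
    assume "zset E Y1 \<inter> zset E C \<noteq> K"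
    then have "Y1 = C \<or> Y1 = vneg C" using U[OF om Kf(1) Kf(2)[unfolded r_def] X1Y1(2) C] KY1
      by (auto simp: K_def)
    then show False using neqY XgN by auto
  qed
  have Y1h: "Y1 h \<noteq> Zer"
  proof
    assume "Y1 h = Zer"
    then have "h \<in> K" using KY1C hE Ch by (auto simp: zset_def)
    then show False using Yh by (auto simp: K_def zset_def)
  qed
  have YY1h: "Y1 h = Y h"
  proof (rule ccontr)
    assume "Y1 h \<noteq> Y h"
    then have "Y h = sneg (Y1 h)" using sign_neq Yh Y1h by metis
    show False
      by (rule PL[OF om Kf(1) Kf(2)[unfolded r_def] Y X1Y1(2) C, of g h])
        (use KY1 neqY XgN Cgf Ch XgYg X1Y1 \<open>Y h = sneg (Y1 h)\<close> Yh in \<open>auto simp: K_def\<close>)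
  qed
  have ZZ1h: "Z h = Z1 h" "Z h \<noteq> Zer" using Zh Z1h YY1h Yh by auto
  define G where "G = zset E Z \<inter> zset E C"
  have FZ: "F \<subseteq> zset E Z"
  proof
    fix x assume "x \<in> F"
    then have "x \<in> E" "X x = Zer" "Y x = Zer" by (auto simp: F_def zset_def)
    then show "x \<in> zset E Z" using Z(3) by (auto simp: zset_def sep_def comp_def)
  qed
  have FZ1: "F \<subseteq> zset E Z1"
  proof
    fix x assume x: "x \<in> F"
    then have "x \<in> L" "x \<in> K" by (auto simp: F_def L_def K_def)
    then have "x \<in> E" "X1 x = Zer" "Y1 x = Zer" using LX1 KY1 by (auto simp: zset_def)
    then show "x \<in> zset E Z1" using Z1(3) by (auto simp: zset_def sep_def comp_def)
  qed
  have gG: "g \<in> G" "g \<notin> F" using gE Z(2) Cgf XgYg by (auto simp: G_def F_def zset_def)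
  have FG: "F \<subset> G" using FZ gG by (auto simp: F_def G_def)
  have ZC: "Z \<noteq> C" "Z \<noteq> vneg C" using ZZ1h Ch by auto
  have Z1C: "Z1 \<noteq> C" "Z1 \<noteq> vneg C" using ZZ1h Ch by auto
  have Gf: "G \<in> flats E \<C>" using flat2[OF Z(1) C] by (simp add: G_def)
  have GC: "G \<subset> zset E C"
    using om_incomp_z[OF om Z(1) C] ZC by (auto simp: G_def)
  obtain e where "e \<in> E" "C e \<noteq> Zer" using om_nonzero[OF om C] by blast
  then have CE: "zset E C \<subset> E" by (auto simp: zset_def)
  have "flat_rank E \<C> F < flat_rank E \<C> G" by (rule RM[OF om Ff(1) Gf FG])
  moreover have "flat_rank E \<C> G < flat_rank E \<C> (zset E C)" by (rule RM[OF om Gf flat1[OF C] GC])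
  moreover have "flat_rank E \<C> (zset E C) < flat_rank E \<C> E" by (rule RM[OF om flat1[OF C] flatE CE])
  ultimately have Gr: "flat_rank E \<C> G = r - 2" using Ff(2) rE r3 by linarith
  have GZ1: "G \<subseteq> zset E Z1"
  proof (rule ccontr)
    assume a: "\<not> G \<subseteq> zset E Z1"
    define G' where "G' = zset E Z1 \<inter> zset E Z \<inter> zset E C"
    have G'f: "G' \<in> flats E \<C>" using flat3I[OF Z1(1) Z(1) C] by (simp add: G'_def)
    have "F \<subset> G'" using FZ FZ1 gG Z1(2) gE by (auto simp: F_def G'_def G_def zset_def)
    then have "flat_rank E \<C> F < flat_rank E \<C> G'" by (rule RM[OF om Ff(1) G'f])
    moreover have "G' \<subset> G" using a by (auto simp: G'_def G_def)
    then have "flat_rank E \<C> G' < flat_rank E \<C> G" by (rule RM[OF om G'f Gf])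
    ultimately show False using Ff(2) Gr r3 by linarith
  qed
  have Z1CG: "zset E Z1 \<inter> zset E C = G"
  proof (rule ccontr)
    assume "zset E Z1 \<inter> zset E C \<noteq> G"
    then have "Z1 = C \<or> Z1 = vneg C" using U[OF om Gf Gr[unfolded r_def] Z1(1) C] GZ1
      by (auto simp: G_def)
    then show False using Z1C by auto
  qed
  have Zf: "Z f = Z1 f"
  proof (cases "Z f = Zer")
    case True
    then have "f \<in> G" using fE Cgf by (auto simp: G_def zset_def)
    then show ?thesis using GZ1 True by (auto simp: zset_def)
  next
    case Zf: False
    show ?thesis
    proof (cases "Z1 f = Zer")
      case True
      then have "f \<in> G" using fE Cgf Z1CG by (auto simp: zset_def)
      then show ?thesis using True by (auto simp: G_def zset_def)
    next
      case Z1f: False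
      show ?thesis
      proof (rule ccontr)
        assume ne: "Z f \<noteq> Z1 f"
        then have s: "Z f = sneg (Z1 f)" using sign_neq Zf Z1f by metis
        show False
          by (rule PL[OF om Gf Gr[unfolded r_def] Z(1) Z1(1) C, of h f])
            (use GZ1 ne ZZ1h Cgf Ch s Zf in \<open>auto simp: G_def\<close>)
      qed
    qed
  qed
  have pp: "prog_pair E \<C> g X1 Y1" "prog_pair E \<C> g X Y"
    using edge X1Y1 XgN cXY XgYg by (auto simp: prog_pair_def comodular_def)
  show ?thesis using p1 p2 pp Zf unfolding arrow_to_def Z_def Z1_def by auto
qed

end
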